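(* Let ${\bf R}=(R_1,\dots,R_d)\in\mathbb R_+^d$, $u=\max\{R_1,\dots,R_d\}$, $v=\min\{R_1,\dots,R_d\}$, and $g({\bf R})=\frac{1}{1/R_1+\cdots+1/R_d}$. Then $v\le d\,g({\bf R})\le u$ and, for all $d\in\mathbb N_+$, $$2^v\sqrt{\frac{1}{e(d+2u)}}\le\big(\mathrm{vol}(B^d_{2{\bf R}})\big)^{g({\bf R})}\le 2^u\Big(\frac{2v+1}{2v}\Big)^{\frac{u}{2v}}\sqrt{\frac{2eu}{d}}.$$
   Context: $B^d_{2{\bf R}}=\{{\bf x}\in\mathbb R^d:\sum_{j=1}^d|x_j|^{2R_j}\le1\}$ and vol is Lebesgue measure; explicitly $\mathrm{vol}(B^d_{2{\bf R}})=2^d\frac{\Gamma(1+\frac{1}{2R_1})\cdots\Gamma(1+\frac{1}{2R_d})}{\Gamma(1+\frac{1}{2R_1}+\cdots+\frac{1}{2R_d})}$. *)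

theory Defs
  imports "HOL-Analysis.Analysis"
begin

text \<open>The generalized unit ball B^d_{2R} in R^d, indexed by a finite type 'n with d = CARD('n).\<close>
definition gen_ball :: "real^'n \<Rightarrow> (real^'n) set" where
  "gen_ball R = {x. (\<Sum>j\<in>UNIV. \<bar>x $ j\<bar> powr (2 * R $ j)) \<le> 1}"

definition gR :: "real^'n \<Rightarrow> real" where
  "gR R = 1 / (\<Sum>j\<in>UNIV. 1 / R $ j)"

end

theory Submission
  imports Defs
begin

lemma sub_step:
  fixes p l a b :: real
  assumes p: "p > 0" and l: "l > 0" and a: "0 < a" "a \<le> b"
  shows "(\<integral>\<^sup>+t. ennreal (exp (- l * t powr p) * indicator {a..b} t) \<partial>lborel)
     \<le> ennreal (Gamma (1/p) / (p * l powr (1/p)))"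
proof -
  define g where "g t = l * t powr p" for t
  define g' where "g' t = l * p * t powr (p - 1)" for t
  define f where "f y = y powr (1/p - 1) / exp y" for y
  have "(\<integral>\<^sup>+x. ennreal (f x * indicator {g a..g b} x) \<partial>lborel) =
             (\<integral>\<^sup>+x. ennreal (f (g x) * g' x * indicator {a..b} x) \<partial>lborel)"
  proof (rule nn_integral_substitution)
    show "set_borel_measurable borel {g a..g b} f"
      unfolding f_def set_borel_measurable_def by measurable
    fix x assume x: "x \<in> {a..b}"
    then have "x > 0" using a by auto
    then show "(g has_real_derivative g' x) (at x)"
      unfolding g_def g'_def by (auto intro!: derivative_eq_intros)
    show "g' x \<ge> 0" unfolding g'_def using p l \<open>x > 0\<close> by auto
  next
    show "continuous_on {a..b} g'" unfolding g'_def using a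
      by (auto intro!: continuous_intros)
  qed (use a in auto)
  also have "\<dots> = (\<integral>\<^sup>+x. ennreal (p * l powr (1/p)) * ennreal (exp (- l * x powr p) * indicator {a..b} x) \<partial>lborel)"
  proof (intro nn_integral_cong)
    fix x :: real
    show "ennreal (f (g x) * g' x * indicator {a..b} x) = ennreal (p * l powr (1/p)) * ennreal (exp (- l * x powr p) * indicator {a..b} x)"
    proof (cases "x \<in> {a..b}")
      case True
      then have x: "x > 0" using a by auto
      have "f (g x) * g' x = (l powr (1/p - 1) * x powr (1 - p)) * (l * p * x powr (p - 1)) / exp (l * x powr p)"
      proof -
        have e: "p * (1/p - 1) = 1 - p" using p by (simp add: field_simps)
        have "(l * x powr p) powr (1/p - 1) = l powr (1/p - 1) * x powr (1 - p)"
          using x l by (simp add: powr_mult powr_powr e)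
        then show ?thesis unfolding f_def g_def g'_def by simp
      qed
      also have "\<dots> = p * (l powr (1/p - 1) * l) * (x powr (1-p) * x powr (p - 1)) / exp (l * x powr p)"
        by (simp add: algebra_simps)
      also have "\<dots> = p * l powr (1/p) / exp (l * x powr p)"
      proof -
        have "l powr (1/p - 1) * l = l powr (1/p)" using l
          by (simp add: powr_diff)
        moreover have "x powr (1-p) * x powr (p - 1) = 1" using x
          by (simp add: powr_add[symmetric])
        ultimately show ?thesis by simp
      qed
      also have "\<dots> = p * l powr (1/p) * exp (- l * x powr p)"
        by (simp add: exp_minus divide_inverse)
      finally have eq: "f (g x) * g' x = p * l powr (1/p) * exp (- l * x powr p)" .
      show ?thesis using True eq p l by (simp add: ennreal_mult[symmetric])
    qed simp
  qed
  also have "\<dots> = ennreal (p * l powr (1/p)) * (\<integral>\<^sup>+x. ennreal (exp (- l * x powr p) * indicator {a..b} x) \<partial>lborel)"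
    by (rule nn_integral_cmult) simp
  finally have eq: "(\<integral>\<^sup>+x. ennreal (f x * indicator {g a..g b} x) \<partial>lborel) = ennreal (p * l powr (1/p)) * (\<integral>\<^sup>+x. ennreal (exp (- l * x powr p) * indicator {a..b} x) \<partial>lborel)" .
  have "(\<integral>\<^sup>+x. ennreal (f x * indicator {g a..g b} x) \<partial>lborel) \<le> (\<integral>\<^sup>+x. ennreal (indicator {0..} x * x powr (1/p - 1) / exp x) \<partial>lborel)"
  proof (rule nn_integral_mono)
    fix x :: real
    have "g a \<ge> 0" unfolding g_def using l a by simp
    then show "ennreal (f x * indicator {g a..g b} x) \<le> ennreal (indicator {0..} x * x powr (1/p - 1) / exp x)"
      unfolding f_def by (auto simp: indicator_def intro!: ennreal_leI)
  qed
  also have "\<dots> = Gamma (1/p)" using Gamma_conv_nn_integral_real[of "1/p"] p by simp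
  finally have le: "ennreal (p * l powr (1/p)) * (\<integral>\<^sup>+x. ennreal (exp (- l * x powr p) * indicator {a..b} x) \<partial>lborel) \<le> ennreal (Gamma (1/p))"
    using eq by simp
  have pos: "p * l powr (1/p) > 0" using p l by simp
  show ?thesis
  proof -
    let ?I = "(\<integral>\<^sup>+x. ennreal (exp (- l * x powr p) * indicator {a..b} x) \<partial>lborel)"
    have "?I = ennreal (1 / (p * l powr (1/p))) * (ennreal (p * l powr (1/p)) * ?I)"
    proof -
      have "ennreal (1 / (p * l powr (1/p))) * ennreal (p * l powr (1/p)) = 1"
        using pos p l by (simp add: ennreal_mult[symmetric])
      then show ?thesis by (simp add: mult.assoc[symmetric])
    qed
    also have "\<dots> \<le> ennreal (1 / (p * l powr (1/p))) * ennreal (Gamma (1/p))"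
      by (intro mult_left_mono le) simp
    also have "\<dots> = ennreal (Gamma (1/p) / (p * l powr (1/p)))"
      using pos by (simp add: ennreal_mult'[symmetric])
    finally show ?thesis .
  qed
qed

lemma half_line:
  fixes p l :: real
  assumes p: "p > 0" and l: "l > 0"
  shows "(\<integral>\<^sup>+t. ennreal (exp (- l * t powr p) * indicator {0<..} t) \<partial>lborel)
     \<le> ennreal (Gamma (1/p) / (p * l powr (1/p)))"
proof -
  define h where "h i t = ennreal (exp (- l * t powr p) * indicator {1/Suc i..Suc i} t)" for i :: nat and t :: real
  have inc: "incseq h"
  proof (rule incseq_SucI, rule le_funI)
    fix i t
    have "1 / real (Suc (Suc i)) \<le> 1 / real (Suc i)" by (simp add: frac_le)
    then show "h i t \<le> h (Suc i) t" unfolding h_def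
      by (auto simp: indicator_def intro!: ennreal_leI)
  qed
  have meas: "\<And>i. h i \<in> borel_measurable lborel" unfolding h_def by measurable
  have "(\<integral>\<^sup>+t. ennreal (exp (- l * t powr p) * indicator {0<..} t) \<partial>lborel)
        \<le> (\<integral>\<^sup>+t. (SUP i. h i t) \<partial>lborel)"
  proof (rule nn_integral_mono)
    fix t :: real
    show "ennreal (exp (- l * t powr p) * indicator {0<..} t) \<le> (SUP i. h i t)"
    proof (cases "t > 0")
      case True
      obtain n :: nat where n: "max t (1/t) \<le> real n" using real_arch_simple by blast
      have "1 / real (Suc n) \<le> t"
      proof -
        have "1/t < real (Suc n)" using n by simp
        then show ?thesis using True by (simp add: field_simps)
      qed
      moreover have "t \<le> real (Suc n)" using n by simp
      ultimately have "h n t = ennreal (exp (- l * t powr p) * indicator {0<..} t)"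
        unfolding h_def using True by (simp add: indicator_def)
      then show ?thesis by (metis SUP_upper UNIV_I)
    qed (simp add: indicator_def)
  qed
  also have "\<dots> = (SUP i. \<integral>\<^sup>+t. h i t \<partial>lborel)"
    by (rule nn_integral_monotone_convergence_SUP[OF inc meas])
  also have "\<dots> \<le> ennreal (Gamma (1/p) / (p * l powr (1/p)))"
  proof (rule SUP_least)
    fix i :: nat
    show "(\<integral>\<^sup>+t. h i t \<partial>lborel) \<le> ennreal (Gamma (1/p) / (p * l powr (1/p)))"
      unfolding h_def by (rule sub_step[OF p l]) (auto simp: field_simps)
  qed
  finally show ?thesis .
qed

lemma full_line:
  fixes p l :: real
  assumes p: "p > 0" and l: "l > 0"
  shows "(\<integral>\<^sup>+t. ennreal (exp (- l * \<bar>t\<bar> powr p)) \<partial>lborel)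
     \<le> ennreal (2 * (Gamma (1/p) / (p * l powr (1/p))))"
proof -
  define f where "f t = ennreal (exp (- l * t powr p) * indicator {0<..} t)" for t :: real
  have fm: "f \<in> borel_measurable borel" unfolding f_def by measurable
  have "(\<integral>\<^sup>+t. ennreal (exp (- l * \<bar>t\<bar> powr p)) \<partial>lborel)
      \<le> (\<integral>\<^sup>+t. f t + f (0 + -1 * t) + indicator {0} t \<partial>lborel)"
  proof (rule nn_integral_mono)
    fix t :: real
    show "ennreal (exp (- l * \<bar>t\<bar> powr p)) \<le> f t + f (0 + -1 * t) + indicator {0} t"
      unfolding f_def by (cases "t > 0"; cases "t < 0") (auto simp: indicator_def)
  qed
  also have "\<dots> = (\<integral>\<^sup>+t. f t \<partial>lborel) + (\<integral>\<^sup>+t. f (0 + -1 * t) \<partial>lborel) + (\<integral>\<^sup>+t. indicator {0} t \<partial>lborel)"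
    using fm by (subst nn_integral_add; simp)+
  also have "(\<integral>\<^sup>+t. indicator {0} t \<partial>lborel) = 0" by simp
  also have "(\<integral>\<^sup>+t. f (0 + -1 * t) \<partial>lborel) = (\<integral>\<^sup>+t. f t \<partial>lborel)"
    using nn_integral_real_affine[OF fm, of "-1" 0] by simp
  finally have A: "(\<integral>\<^sup>+t. ennreal (exp (- l * \<bar>t\<bar> powr p)) \<partial>lborel) \<le> (\<integral>\<^sup>+t. f t \<partial>lborel) + (\<integral>\<^sup>+t. f t \<partial>lborel)" by simp
  have B: "(\<integral>\<^sup>+t. f t \<partial>lborel) \<le> ennreal (Gamma (1/p) / (p * l powr (1/p)))"
    unfolding f_def by (rule half_line[OF p l])
  have G: "Gamma (1/p) / (p * l powr (1/p)) \<ge> 0" using p l by (simp add: Gamma_real_pos less_imp_le)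
  have "(\<integral>\<^sup>+t. f t \<partial>lborel) + (\<integral>\<^sup>+t. f t \<partial>lborel) \<le> ennreal (Gamma (1/p) / (p * l powr (1/p))) + ennreal (Gamma (1/p) / (p * l powr (1/p)))"
    by (intro add_mono B)
  also have "\<dots> = ennreal (2 * (Gamma (1/p) / (p * l powr (1/p))))"
    by (subst mult_2) (rule ennreal_plus[OF G G, symmetric])
  finally show ?thesis using A by simp
qed

lemma Basis_vec_range: "(Basis :: (real^'n) set) = range (\<lambda>i. axis i 1)"
  by (auto simp: Basis_vec_def)

lemma prod_Basis_vec:
  fixes g :: "real^'n \<Rightarrow> 'b::comm_monoid_mult"
  shows "prod g Basis = (\<Prod>j\<in>UNIV. g (axis j 1))"
proof -
  have "inj (\<lambda>i::'n. axis i (1::real))" by (auto intro!: injI simp: axis_eq_axis)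
  then show ?thesis unfolding Basis_vec_range by (simp add: prod.reindex)
qed

lemma Gamma_bound:
  fixes x :: real
  assumes x: "x > 0"
  shows "Gamma (1 + x) \<le> (1 + x) powr x"
proof -
  define t where "t = x / (1 + x)"
  have t: "0 \<le> t" "t \<le> 1" using x by (auto simp: t_def)
  have c: "(ln \<circ> Gamma) ((1 - t) *\<^sub>R 1 + t *\<^sub>R (2 + x)) \<le> (1 - t) * (ln \<circ> Gamma) 1 + t * (ln \<circ> Gamma) (2 + x)"
    by (rule convex_onD[OF log_convex_Gamma_real t]) (use x in auto)
  have e: "(1 - t) *\<^sub>R 1 + t *\<^sub>R (2 + x) = 1 + x"
    using x by (simp add: t_def field_simps)
  have g: "Gamma (2 + x) = (1 + x) * Gamma (1 + x)"
  proof -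
    have "1 + x \<notin> \<int>\<^sub>\<le>\<^sub>0" using x by (auto elim!: nonpos_Ints_cases)
    from Gamma_plus1[OF this] show ?thesis by (simp add: add_ac)
  qed
  have gp: "Gamma (1 + x) > 0" using x by (intro Gamma_real_pos) simp
  have "ln (Gamma (2 + x)) = ln (1 + x) + ln (Gamma (1 + x))"
    unfolding g using gp x by (intro ln_mult_pos) auto
  then have "ln (Gamma (1 + x)) \<le> t * (ln (1 + x) + ln (Gamma (1 + x)))"
    using c unfolding e by simp
  then have "(1 - t) * ln (Gamma (1 + x)) \<le> t * ln (1 + x)" by (simp add: algebra_simps)
  then have "ln (Gamma (1 + x)) + x * ln (Gamma (1 + x)) \<le> x * ln (1 + x) + x * (x * ln (1 + x))"
    using x by (simp add: t_def field_simps)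
  then have "(1 + x) * (ln (Gamma (1 + x)) - x * ln (1 + x)) \<le> 0"
    by (simp add: algebra_simps)
  then have "ln (Gamma (1 + x)) - x * ln (1 + x) \<le> 0"
    using x by (simp add: mult_le_0_iff)
  then have "ln (Gamma (1 + x)) \<le> x * ln (1 + x)" by simp
  then have "Gamma (1 + x) \<le> exp (x * ln (1 + x))"
    using x by (metis Gamma_real_pos add_pos_pos exp_ln exp_le_cancel_iff zero_less_one)
  then show ?thesis using x by (simp add: powr_def)
qed

lemma gen_ball_sets: "gen_ball R \<in> sets borel"
  unfolding gen_ball_def by measurable

lemma vol_upper:
  fixes R :: "real^'n" and l :: real
  assumes pos: "\<And>j. R $ j > 0" and l: "l > 0"
  shows "emeasure lborel (gen_ball R) \<le>
    ennreal (exp l * (\<Prod>j\<in>UNIV. 2 * (Gamma (1/(2*R$j)) / ((2*R$j) * l powr (1/(2*R$j))))))"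
proof -
  define f where "f b t = ennreal (exp (- l * \<bar>t\<bar> powr (2 * (R \<bullet> b))))" for b :: "real^'n" and t :: real
  define F where "F x = (\<Sum>j\<in>UNIV. \<bar>x $ j\<bar> powr (2 * R $ j))" for x :: "real^'n"
  have fm: "\<And>b. f b \<in> borel_measurable borel" unfolding f_def by measurable
  have prodf: "(\<Prod>b\<in>Basis. f b (x \<bullet> b)) = ennreal (exp (- l * F x))" for x
  proof -
    have "(\<Prod>b\<in>Basis. f b (x \<bullet> b)) = (\<Prod>j\<in>UNIV. f (axis j 1) (x \<bullet> axis j 1))"
      by (rule prod_Basis_vec)
    also have "\<dots> = (\<Prod>j\<in>UNIV. ennreal (exp (- l * \<bar>x $ j\<bar> powr (2 * R $ j))))"
      unfolding f_def by (simp add: inner_axis)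
    also have "\<dots> = ennreal (\<Prod>j\<in>UNIV. exp (- l * \<bar>x $ j\<bar> powr (2 * R $ j)))"
      by (rule prod_ennreal) simp
    also have "(\<Prod>j\<in>UNIV. exp (- l * \<bar>x $ j\<bar> powr (2 * R $ j))) = exp (- l * F x)"
      unfolding F_def by (simp add: exp_sum[symmetric] sum_distrib_left)
    finally show ?thesis .
  qed
  have "emeasure lborel (gen_ball R) = (\<integral>\<^sup>+x. indicator (gen_ball R) x \<partial>lborel)"
    by (rule nn_integral_indicator[symmetric]) (simp add: gen_ball_sets)
  also have "\<dots> \<le> (\<integral>\<^sup>+x. ennreal (exp l) * (\<Prod>b\<in>Basis. f b (x \<bullet> b)) \<partial>lborel)"
  proof (rule nn_integral_mono)
    fix x :: "real^'n"
    show "indicator (gen_ball R) x \<le> ennreal (exp l) * (\<Prod>b\<in>Basis. f b (x \<bullet> b))"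
    proof (cases "x \<in> gen_ball R")
      case True
      then have "F x \<le> 1" unfolding gen_ball_def F_def by simp
      then have "1 \<le> exp l * exp (- l * F x)"
        using l by (simp add: exp_add[symmetric] mult_left_le)
      then have "ennreal 1 \<le> ennreal (exp l * exp (- l * F x))" by (rule ennreal_leI)
      then show ?thesis using True by (simp add: prodf ennreal_mult[symmetric])
    qed simp
  qed
  also have "\<dots> = ennreal (exp l) * (\<integral>\<^sup>+x. (\<Prod>b\<in>Basis. f b (x \<bullet> b)) \<partial>lborel)"
    by (rule nn_integral_cmult) (use fm in measurable)
  finally have A: "emeasure lborel (gen_ball R) \<le> ennreal (exp l) * (\<integral>\<^sup>+x. (\<Prod>b\<in>Basis. f b (x \<bullet> b)) \<partial>lborel)" .
  have "(\<integral>\<^sup>+x. (\<Prod>b\<in>Basis. f b (x \<bullet> b)) \<partial>lborel) = (\<Prod>b\<in>Basis. integral\<^sup>N lborel (f b))"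
    by (rule nn_integral_lborel_prod) (use fm in auto)
  also have "\<dots> = (\<Prod>j\<in>UNIV. integral\<^sup>N lborel (f (axis j 1)))"
    by (rule prod_Basis_vec)
  also have "\<dots> \<le> (\<Prod>j\<in>UNIV. ennreal (2 * (Gamma (1/(2*R$j)) / ((2*R$j) * l powr (1/(2*R$j))))))"
  proof (rule prod_mono_ennreal)
    fix j
    have "integral\<^sup>N lborel (f (axis j 1)) = (\<integral>\<^sup>+t. ennreal (exp (- l * \<bar>t\<bar> powr (2 * R $ j))) \<partial>lborel)"
      unfolding f_def by (simp add: inner_axis)
    also have "\<dots> \<le> ennreal (2 * (Gamma (1/(2*R$j)) / ((2*R$j) * l powr (1/(2*R$j)))))"
      by (rule full_line) (use pos[of j] l in auto)
    finally show "integral\<^sup>N lborel (f (axis j 1)) \<le> ennreal (2 * (Gamma (1/(2*R$j)) / ((2*R$j) * l powr (1/(2*R$j)))))" .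
  qed
  also have "\<dots> = ennreal (\<Prod>j\<in>UNIV. 2 * (Gamma (1/(2*R$j)) / ((2*R$j) * l powr (1/(2*R$j)))))"
    by (rule prod_ennreal) (use pos l in \<open>auto intro!: divide_nonneg_pos less_imp_le\<close>)
  finally have B: "(\<integral>\<^sup>+x. (\<Prod>b\<in>Basis. f b (x \<bullet> b)) \<partial>lborel) \<le> ennreal (\<Prod>j\<in>UNIV. 2 * (Gamma (1/(2*R$j)) / ((2*R$j) * l powr (1/(2*R$j)))))" .
  have X: "emeasure lborel (gen_ball R) \<le> ennreal (exp l) * ennreal (\<Prod>j\<in>UNIV. 2 * (Gamma (1/(2*R$j)) / ((2*R$j) * l powr (1/(2*R$j)))))"
    using A B by (meson mult_left_mono order_trans zero_le)
  show ?thesis by (subst ennreal_mult') (use X in auto)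
qed

lemma vol_lower:
  fixes R :: "real^'n"
  assumes pos: "\<And>j. R $ j > 0"
  shows "ennreal (\<Prod>j\<in>UNIV. 2 * real CARD('n) powr (- (1/(2*R$j)))) \<le> emeasure lborel (gen_ball R)"
proof -
  define d where "d = real CARD('n)"
  have d: "d \<ge> 1" unfolding d_def by simp
  define c :: "real^'n" where "c = (\<chi> j. d powr (- (1/(2*R$j))))"
  have cpos: "c $ j > 0" for j unfolding c_def using d by simp
  have sub: "cbox (-c) c \<subseteq> gen_ball R"
  proof
    fix y assume "y \<in> cbox (-c) c"
    then have y: "\<bar>y $ j\<bar> \<le> c $ j" for j by (simp add: mem_box_cart abs_le_iff) (metis minus_le_iff)
    have "\<bar>y $ j\<bar> powr (2 * R $ j) \<le> 1 / d" for j
    proof -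
      have "\<bar>y $ j\<bar> powr (2 * R $ j) \<le> (c $ j) powr (2 * R $ j)"
        using y[of j] pos[of j] by (intro powr_mono2) auto
      also have "\<dots> = d powr (- (1/(2*R$j)) * (2 * R $ j))"
        unfolding c_def using d by (simp add: powr_powr)
      also have "- (1/(2*R$j)) * (2 * R $ j) = -1" using pos[of j] by simp
      finally show ?thesis using d by (simp add: powr_minus divide_inverse)
    qed
    then have "(\<Sum>j\<in>UNIV. \<bar>y $ j\<bar> powr (2 * R $ j)) \<le> of_nat (card (UNIV :: 'n set)) * (1 / d)"
      by (intro sum_bounded_above) auto
    also have "\<dots> = 1" using d unfolding d_def by simp
    finally show "y \<in> gen_ball R" unfolding gen_ball_def by simp
  qed
  have "emeasure lborel (cbox (-c) c) = ennreal (prod ((\<bullet>) (c - -c)) Basis)"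
    by (rule emeasure_lborel_cbox) (use cpos in \<open>auto simp: Basis_vec_range inner_axis less_imp_le\<close>)
  also have "prod ((\<bullet>) (c - -c)) Basis = (\<Prod>j\<in>UNIV. 2 * d powr (- (1/(2*R$j))))"
    by (subst prod_Basis_vec) (simp add: inner_axis c_def)
  finally have "emeasure lborel (cbox (-c) c) = ennreal (\<Prod>j\<in>UNIV. 2 * d powr (- (1/(2*R$j))))" .
  moreover have "emeasure lborel (cbox (-c) c) \<le> emeasure lborel (gen_ball R)"
    by (rule emeasure_mono[OF sub]) (simp add: gen_ball_sets)
  ultimately show ?thesis unfolding d_def by simp
qed

theorem lemma3p4:
  fixes R :: "real^'n"
  assumes pos: "\<And>j. R $ j > 0"
  defines "u \<equiv> Max (range (\<lambda>j. R $ j))"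
      and "v \<equiv> Min (range (\<lambda>j. R $ j))"
      and "d \<equiv> real CARD('n)"
  shows "v \<le> d * gR R \<and> d * gR R \<le> u \<and>
         2 powr v * sqrt (1 / (exp 1 * (d + 2 * u)))
           \<le> measure lebesgue (gen_ball R) powr gR R \<and>
         measure lebesgue (gen_ball R) powr gR R
           \<le> 2 powr u * ((2 * v + 1) / (2 * v)) powr (u / (2 * v)) * sqrt (2 * exp 1 * u / d)"
proof -
  define x where "x j = 1 / (2 * R $ j)" for j
  define S where "S = (\<Sum>j\<in>UNIV. x j)"
  define g where "g = gR R"
  have d1: "d \<ge> 1" unfolding d_def by simp
  have xpos: "x j > 0" for j unfolding x_def using pos[of j] by simp
  have Spos: "S > 0" unfolding S_def by (rule sum_pos) (auto simp: xpos)
  have vle: "v \<le> R $ j" for j unfolding v_def by (rule Min_le) auto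
  have ule: "R $ j \<le> u" for j unfolding u_def by (rule Max_ge) auto
  have vin: "v \<in> range (\<lambda>j. R $ j)" unfolding v_def by (rule Min_in) auto
  then have vpos: "v > 0" using pos by auto
  have uv: "v \<le> u" using vle[of undefined] ule[of undefined] by simp
  have upos: "u > 0" using uv vpos by simp
  have sumR: "(\<Sum>j\<in>UNIV. 1 / R $ j) = 2 * S"
    unfolding S_def x_def by (simp add: sum_distrib_left)
  have g_def': "g = 1 / (2 * S)" unfolding g_def gR_def sumR ..
  have gpos: "g > 0" using Spos g_def' by simp
  have gS: "g * S = 1/2" using Spos g_def' by simp
  have "(\<Sum>j\<in>UNIV. 1 / R $ j) \<le> of_nat (card (UNIV :: 'n set)) * (1 / v)"
    by (intro sum_bounded_above) (use vle pos vpos in \<open>auto intro!: divide_left_mono\<close>)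
  then have S_le: "2 * S \<le> d / v" unfolding sumR d_def by simp
  have "of_nat (card (UNIV :: 'n set)) * (1 / u) \<le> (\<Sum>j\<in>UNIV. 1 / R $ j)"
    by (intro sum_bounded_below) (use ule pos upos in \<open>auto intro!: divide_left_mono\<close>)
  then have S_ge: "d / u \<le> 2 * S" unfolding sumR d_def by simp
  have dg_ge: "v \<le> d * g"
  proof -
    have "v * (2 * S) \<le> d" using S_le vpos by (simp add: field_simps)
    then show ?thesis unfolding g_def' using Spos by (simp add: field_simps)
  qed
  have dg_le: "d * g \<le> u"
  proof -
    have "d \<le> u * (2 * S)" using S_ge upos by (simp add: field_simps)
    then show ?thesis unfolding g_def' using Spos by (simp add: field_simps)
  qed
  define c where "c = 1 + 1 / (2 * v)"
  have c1: "c \<ge> 1" unfolding c_def using vpos by simp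
  have cv: "(2 * v + 1) / (2 * v) = c" unfolding c_def using vpos by (simp add: field_simps)
  define vol where "vol = measure lebesgue (gen_ball R)"
  have vol_eq: "vol = measure lborel (gen_ball R)"
    unfolding vol_def by (rule measure_completion) (simp add: gen_ball_sets)
  define U where "U = exp S * (2 ^ CARD('n) * (c / S) powr S)"
  have Ubound: "(\<Prod>j\<in>UNIV. 2 * (Gamma (1/(2*R$j)) / ((2*R$j) * S powr (1/(2*R$j))))) \<le> (\<Prod>j\<in>UNIV. 2 * (c / S) powr x j)"
  proof (rule prod_mono, safe)
    fix j
    have G: "Gamma (1/(2*R$j)) / (2*R$j) = Gamma (1 + x j)"
    proof -
      have "x j \<notin> \<int>\<^sub>\<le>\<^sub>0" using xpos[of j] by (auto elim!: nonpos_Ints_cases)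
      from Gamma_plus1[OF this] show ?thesis unfolding x_def by (simp add: add_ac)
    qed
    have "Gamma (1 + x j) \<le> (1 + x j) powr x j" by (rule Gamma_bound[OF xpos])
    also have "\<dots> \<le> c powr x j"
    proof (rule powr_mono2)
      show "1 + x j \<le> c" unfolding c_def x_def using vle[of j] vpos pos[of j]
        by (simp add: frac_le)
    qed (use xpos[of j] in auto)
    finally have GB: "Gamma (1 + x j) \<le> c powr x j" .
    have "Gamma (1/(2*R$j)) / ((2*R$j) * S powr (1/(2*R$j))) = Gamma (1 + x j) / S powr x j"
      using G unfolding x_def by (metis divide_divide_eq_left)
    also have "\<dots> \<le> c powr x j / S powr x j"
      using GB Spos by (simp add: divide_right_mono)
    also have "\<dots> = (c / S) powr x j" using c1 Spos by (simp add: powr_divide)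
    finally have "Gamma (1/(2*R$j)) / ((2*R$j) * S powr (1/(2*R$j))) \<le> (c / S) powr x j" .
    then show "2 * (Gamma (1/(2*R$j)) / ((2*R$j) * S powr (1/(2*R$j)))) \<le> 2 * (c / S) powr x j" by simp
    show "0 \<le> 2 * (Gamma (1/(2*R$j)) / ((2*R$j) * S powr (1/(2*R$j))))"
      using pos[of j] Spos by (auto intro!: divide_nonneg_pos less_imp_le)
  qed
  have prod_eq: "(\<Prod>j\<in>UNIV. 2 * (c / S) powr x j) = 2 ^ CARD('n) * (c / S) powr S"
    using c1 Spos by (simp add: prod.distrib powr_sum S_def)
  have em_up: "emeasure lborel (gen_ball R) \<le> ennreal U"
  proof -
    have "emeasure lborel (gen_ball R) \<le> ennreal (exp S * (\<Prod>j\<in>UNIV. 2 * (Gamma (1/(2*R$j)) / ((2*R$j) * S powr (1/(2*R$j))))))"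
      by (rule vol_upper[OF pos Spos])
    also have "\<dots> \<le> ennreal U" unfolding U_def using Ubound prod_eq
      by (intro ennreal_leI) simp
    finally show ?thesis .
  qed
  have Upos: "U > 0" unfolding U_def using c1 Spos by simp
  have fin: "gen_ball R \<in> fmeasurable lborel"
    using em_up gen_ball_sets by (intro fmeasurableI) (auto simp: top_unique le_less_trans)
  have vol_up: "vol \<le> U"
  proof -
    have "emeasure lborel (gen_ball R) = ennreal vol" unfolding vol_eq using fin
      by (simp add: emeasure_eq_measure2)
    then show ?thesis using em_up Upos by simp
  qed
  define L where "L = 2 ^ CARD('n) * d powr (- S)"
  have L_eq: "(\<Prod>j\<in>UNIV. 2 * real CARD('n) powr (- (1/(2*R$j)))) = L"
    unfolding L_def S_def x_def d_def by (simp add: prod.distrib powr_sum[symmetric] sum_negf)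
  have Lpos: "L > 0" unfolding L_def using d1 by simp
  have vol_lo: "L \<le> vol"
  proof -
    have "ennreal L \<le> emeasure lborel (gen_ball R)" using vol_lower[OF pos] L_eq by simp
    also have "emeasure lborel (gen_ball R) = ennreal vol" unfolding vol_eq using fin
      by (simp add: emeasure_eq_measure2)
    finally show ?thesis using ennreal_le_iff[of vol L] unfolding vol_eq by (simp add: measure_nonneg)
  qed
  have volpos: "vol > 0" using Lpos vol_lo by simp
  have lnvol: "ln (vol powr g) = g * ln vol" using volpos by (simp add: ln_powr)
  have lnU: "ln U = S + real CARD('n) * ln 2 + S * (ln c - ln S)"
    unfolding U_def using c1 Spos by (simp add: ln_mult ln_powr ln_div ln_realpow)
  have up_ln: "g * ln vol \<le> 1/2 + d * g * ln 2 + (ln c - ln S) / 2"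
  proof -
    have "g * ln vol \<le> g * ln U"
      using vol_up volpos gpos by (intro mult_left_mono) auto
    also have "g * ln U = g * S + d * g * ln 2 + g * S * (ln c - ln S)"
      unfolding lnU d_def by (simp add: algebra_simps)
    finally show ?thesis unfolding gS by simp
  qed
  define T where "T = 2 powr u * ((2 * v + 1) / (2 * v)) powr (u / (2 * v)) * sqrt (2 * exp 1 * u / d)"
  have lnT: "ln T = u * ln 2 + (u / (2 * v)) * ln c + (ln 2 + 1 + ln u - ln d) / 2"
    unfolding T_def cv using c1 upos d1 by (simp add: ln_mult ln_powr ln_div ln_sqrt)
  have c0: "ln c \<ge> 0" using c1 by simp
  have t1: "d * g * ln 2 \<le> u * ln 2" using dg_le by (simp add: mult_right_mono)
  have t2: "ln c / 2 \<le> (u / (2 * v)) * ln c"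
  proof -
    have h: "1 / 2 \<le> u / (2 * v)" using uv vpos by (simp add: field_simps)
    show ?thesis using mult_right_mono[OF h c0] by simp
  qed
  have t3: "- ln S \<le> ln 2 + ln u - ln d"
  proof -
    have "d / (2 * u) \<le> S" using S_ge upos by (simp add: field_simps)
    then have "ln (d / (2 * u)) \<le> ln S" using d1 upos Spos by (subst ln_le_cancel_iff) auto
    then show ?thesis using d1 upos by (simp add: ln_div ln_mult)
  qed
  have Tpos: "T > 0" unfolding T_def using c1 upos d1 cv by simp
  have "ln (vol powr g) \<le> ln T"
  proof -
    define A where "A = u / (2 * v) * ln c"
    define B where "B = d * g * ln 2"
    define C where "C = u * ln 2"
    define Lv where "Lv = g * ln vol"
    have "Lv \<le> C + A + (ln 2 + 1 + ln u - ln d) / 2"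
      using up_ln[folded B_def Lv_def] t1[folded B_def C_def] t2[folded A_def] t3 by argo
    then show ?thesis unfolding lnvol lnT A_def C_def Lv_def .
  qed
  then have upper: "vol powr g \<le> T" using volpos Tpos ln_le_cancel_iff[of "vol powr g" T] by simp
  have lnL: "ln L = real CARD('n) * ln 2 - S * ln d"
    unfolding L_def using d1 by (simp add: ln_mult ln_powr ln_realpow)
  have lo_ln: "d * g * ln 2 - ln d / 2 \<le> g * ln vol"
  proof -
    have "g * ln L \<le> g * ln vol"
      using vol_lo Lpos gpos by (intro mult_left_mono) auto
    moreover have "g * ln L = d * g * ln 2 - g * S * ln d"
      unfolding lnL d_def by (simp add: algebra_simps)
    ultimately show ?thesis unfolding gS by simp
  qed
  define T' where "T' = 2 powr v * sqrt (1 / (exp 1 * (d + 2 * u)))"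
  have T'pos: "T' > 0" unfolding T'_def using d1 upos by simp
  have lnT': "ln T' = v * ln 2 - (1 + ln (d + 2 * u)) / 2"
  proof -
    have a: "ln (1 / (exp 1 * (d + 2*u))) = - (1 + ln (d + 2*u))"
      using d1 upos by (simp add: ln_div ln_mult)
    have b: "ln (sqrt (1 / (exp 1 * (d + 2 * u)))) = ln (1 / (exp 1 * (d + 2*u))) / 2"
      using d1 upos by (intro ln_sqrt) auto
    have c: "ln T' = ln (2 powr v) + ln (sqrt (1 / (exp 1 * (d + 2 * u))))"
      unfolding T'_def using d1 upos by (intro ln_mult_pos) auto
    have e: "ln (2 powr v) = v * ln 2" by (simp add: ln_powr)
    show ?thesis unfolding c b a e by argo
  qed
  have s1: "v * ln 2 \<le> d * g * ln 2" using dg_ge by (simp add: mult_right_mono)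
  have s2: "ln d \<le> ln (d + 2 * u)" using d1 upos by simp
  have "ln T' \<le> ln (vol powr g)"
  proof -
    define B where "B = d * g * ln 2"
    define C where "C = v * ln 2"
    define Lv where "Lv = g * ln vol"
    have "C - (1 + ln (d + 2 * u)) / 2 \<le> Lv"
      using lo_ln[folded B_def Lv_def] s1[folded B_def C_def] s2 by argo
    then show ?thesis unfolding lnvol lnT' C_def Lv_def .
  qed
  then have lower: "T' \<le> vol powr g" using volpos T'pos ln_le_cancel_iff[of T' "vol powr g"] by simp
  show ?thesis using dg_ge dg_le upper lower
    unfolding T_def T'_def vol_def g_def by simp
qed

end
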